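(* Let $X,Y$ be a section-pair with $m\ge 2$ chords. Then there is a parallel collection of subsection pairs $X_1,Y_1;\dots;X_t,Y_t$ such that $\sum_{i=1}^t e(X_i,Y_i)\ge m/24$ and one of the following holds: (1) for every $i$, there is a vertex of $X_i\cup Y_i$ incident to at least $\frac{e(X_i,Y_i)}{6\log m}$ chords of $E(X_i,Y_i)$; (2) for every $i$, there is a chord in $E(X_i,Y_i)$ which interlaces at least $\frac{e(X_i,Y_i)}{6\log m}$ of the chords in $E(X_i,Y_i)$.
   Context: Logarithms are base 2. A section-pair in a graph $G$ is a pair $X,Y$ of vertex-disjoint paths; the two endpoints of $X$ are designated its top $x^{t}$ and bottom $x^{b}$, and those of $Y$ its top $y^t$ and bottom $y^b$. For distinct $x_1,x_2\in X$, $x_1$ is above $x_2$ if $x_1$ is closer to $x^t$ along $X$ than $x_2$, otherwise below; similarly in $Y$. For vertex sets $A,B\subseteq X$ (or $\subseteq Y$), $A$ is above (resp. below) $B$ if every vertex of $A$ is above (resp. below) every vertex of $B$. A chord is an edge of $G$ with one endpoint in $X$ and one in $Y$. Two chords $(x_1,y_1),(x_2,y_2)$ ($x_i\in X,y_i\in Y$) with no common vertex are parallel if for some $i\in\{1,2\}$, $x_i$ is above $x_{3-i}$ and $y_i$ is above $y_{3-i}$; otherwise they are interlacing (a chord interlaces another). A subsection pair of $X,Y$ is a section-pair $X',Y'$ where $X'$ is a subpath of $X$ and $Y'$ a subpath of $Y$ (tops being the endpoints closer to $x^t$, resp. $y^t$); $E(X',Y')$ is the set of chords with one endpoint in $X'$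 and one in $Y'$, and $e(X',Y')=|E(X',Y')|$. A collection $X_1,Y_1;\dots;X_t,Y_t$ of subsection pairs, with the $X_i$ pairwise vertex-disjoint and the $Y_i$ pairwise vertex-disjoint, labeled so that $X_i$ is below $X_j$ for all $i<j$, is parallel if also $Y_i$ is below $Y_j$ for all $i<j$. *)

theory Defs
  imports Complex_Main
begin

text \<open>A path is a nonempty list of distinct vertices, consecutive ones adjacent;
  its top is the first element (hd) and its bottom is the last element.\<close>

definition simple_graph :: "('a \<Rightarrow> 'a \<Rightarrow> bool) \<Rightarrow> bool" where
  "simple_graph E \<longleftrightarrow> (\<forall>u v. E u v \<longrightarrow> E v u) \<and> (\<forall>v. \<not> E v v)"

definition is_path :: "('a \<Rightarrow> 'a \<Rightarrow> bool) \<Rightarrow> 'a list \<Rightarrow> bool" where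
  "is_path E P \<longleftrightarrow> P \<noteq> [] \<and> distinct P \<and> (\<forall>i. Suc i < length P \<longrightarrow> E (P ! i) (P ! Suc i))"

definition section_pair :: "('a \<Rightarrow> 'a \<Rightarrow> bool) \<Rightarrow> 'a list \<Rightarrow> 'a list \<Rightarrow> bool" where
  "section_pair E X Y \<longleftrightarrow> is_path E X \<and> is_path E Y \<and> set X \<inter> set Y = {}"

definition chords :: "('a \<Rightarrow> 'a \<Rightarrow> bool) \<Rightarrow> 'a list \<Rightarrow> 'a list \<Rightarrow> ('a \<times> 'a) set" where
  "chords E X Y = {(x, y). x \<in> set X \<and> y \<in> set Y \<and> E x y}"

definition above :: "'a list \<Rightarrow> 'a \<Rightarrow> 'a \<Rightarrow> bool" where
  "above P a b \<longleftrightarrow> (\<exists>i j. i < j \<and> j < length P \<and> P ! i = a \<and> P ! j = b)"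

definition set_below :: "'a list \<Rightarrow> 'a set \<Rightarrow> 'a set \<Rightarrow> bool" where
  "set_below P A B \<longleftrightarrow> (\<forall>a\<in>A. \<forall>b\<in>B. above P b a)"

definition parallel_chords :: "'a list \<Rightarrow> 'a list \<Rightarrow> 'a \<times> 'a \<Rightarrow> 'a \<times> 'a \<Rightarrow> bool" where
  "parallel_chords X Y c d \<longleftrightarrow>
     fst c \<noteq> fst d \<and> snd c \<noteq> snd d \<and>
     ((above X (fst c) (fst d) \<and> above Y (snd c) (snd d)) \<or>
      (above X (fst d) (fst c) \<and> above Y (snd d) (snd c)))"

definition interlacing :: "'a list \<Rightarrow> 'a list \<Rightarrow> 'a \<times> 'a \<Rightarrow> 'a \<times> 'a \<Rightarrow> bool" where
  "interlacing X Y c d \<longleftrightarrow>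
     fst c \<noteq> fst d \<and> snd c \<noteq> snd d \<and> \<not> parallel_chords X Y c d"

definition subpath :: "'a list \<Rightarrow> 'a list \<Rightarrow> bool" where
  "subpath P' P \<longleftrightarrow> P' \<noteq> [] \<and> (\<exists>as bs. P = as @ P' @ bs)"

definition parallel_collection :: "'a list \<Rightarrow> 'a list \<Rightarrow> ('a list \<times> 'a list) list \<Rightarrow> bool" where
  "parallel_collection X Y C \<longleftrightarrow>
     (\<forall>i < length C. subpath (fst (C ! i)) X \<and> subpath (snd (C ! i)) Y) \<and>
     (\<forall>i j. i < j \<and> j < length C \<longrightarrow>
        set (fst (C ! i)) \<inter> set (fst (C ! j)) = {} \<and>
        set (snd (C ! i)) \<inter> set (snd (C ! j)) = {} \<and>
        set_below X (set (fst (C ! i))) (set (fst (C ! j))) \<and>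
        set_below Y (set (snd (C ! i))) (set (snd (C ! j))))"

end

theory Submission
  imports Defs
begin

fun pts :: "(nat\<times>nat) set \<Rightarrow> nat\<times>nat\<times>nat\<times>nat \<Rightarrow> (nat\<times>nat) set" where
  "pts P (a,b,c,d) = {p\<in>P. a \<le> fst p \<and> fst p < b \<and> c \<le> snd p \<and> snd p < d}"

definition ilace :: "nat\<times>nat \<Rightarrow> nat\<times>nat \<Rightarrow> bool" where
  "ilace p q \<longleftrightarrow> fst p \<noteq> fst q \<and> snd p \<noteq> snd q \<and>
     \<not> ((fst p < fst q \<and> snd p < snd q) \<or> (fst q < fst p \<and> snd q < snd p))"

definition good1 :: "(nat\<times>nat) set \<Rightarrow> real \<Rightarrow> nat\<times>nat\<times>nat\<times>nat \<Rightarrow> bool" where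
  "good1 P L R \<longleftrightarrow> (\<exists>p\<in>pts P R.
     real (card {q\<in>pts P R. fst q = fst p}) \<ge> real (card (pts P R)) / L \<or>
     real (card {q\<in>pts P R. snd q = snd p}) \<ge> real (card (pts P R)) / L)"

definition good2 :: "(nat\<times>nat) set \<Rightarrow> real \<Rightarrow> nat\<times>nat\<times>nat\<times>nat \<Rightarrow> bool" where
  "good2 P L R \<longleftrightarrow> (\<exists>p\<in>pts P R.
     real (card {q\<in>pts P R. ilace p q}) \<ge> real (card (pts P R)) / L)"

fun inside :: "nat\<times>nat\<times>nat\<times>nat \<Rightarrow> nat\<times>nat\<times>nat\<times>nat \<Rightarrow> bool" where
  "inside (a,b,c,d) (a',b',c',d') \<longleftrightarrow> a \<le> a' \<and> a' < b' \<and> b' \<le> b \<and> c \<le> c' \<and> c' < d' \<and> d' \<le> d"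

fun sep :: "nat\<times>nat\<times>nat\<times>nat \<Rightarrow> nat\<times>nat\<times>nat\<times>nat \<Rightarrow> bool" where
  "sep (a,b,c,d) (a',b',c',d') \<longleftrightarrow> b' \<le> a \<and> d' \<le> c"

definition chain :: "(nat\<times>nat) set \<Rightarrow> real \<Rightarrow> nat\<times>nat\<times>nat\<times>nat \<Rightarrow> (nat\<times>nat\<times>nat\<times>nat) list \<Rightarrow> bool" where
  "chain P L R C \<longleftrightarrow> (\<forall>x\<in>set C. inside R x \<and> (good1 P L x \<or> good2 P L x)) \<and> sorted_wrt sep C"

lemma arith_step:
  fixes e e1 e2 :: nat and W1 W2 L :: real
  assumes L: "L \<ge> 20" and lg: "5 * log 2 e \<le> L" and e: "e \<ge> 1"
    and h1: "2*e1 \<le> e" and h2: "2*e2 \<le> e"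
    and s: "real e1 + real e2 \<ge> real e - 4*real e/L"
    and w1: "W1 \<ge> real e1 - 5*real e1*log 2 (real e1)/L" and w2: "W2 \<ge> real e2 - 5*real e2*log 2 (real e2)/L"
  shows "W1 + W2 \<ge> real e - 5*real e*log 2 (real e)/L"
proof -
  define l where "l = log 2 e"
  have l0: "l \<ge> 0" using e by (simp add: l_def)
  have key: "real k * log 2 k \<le> real k * (l - 1)" if "2*k \<le> e" for k :: nat
  proof (cases "k = 0")
    case True then show ?thesis by simp
  next
    case False
    have "log 2 k \<le> log 2 (real e / 2)"
      using False that by (subst log_le_cancel_iff) auto
    also have "\<dots> = l - 1" using e by (simp add: l_def log_divide)
    finally show ?thesis by (simp add: mult_left_mono)
  qed
  have Lp: "L > 0" using L by simp
  have a1: "W1 \<ge> e1 - 5*e1*(l-1)/L"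
  proof -
    have "5*real e1*log 2 e1/L \<le> 5*real e1*(l-1)/L"
      using key[OF h1] Lp by (intro divide_right_mono) auto
    then show ?thesis using w1 by simp
  qed
  have a2: "W2 \<ge> e2 - 5*e2*(l-1)/L"
  proof -
    have "5*real e2*log 2 e2/L \<le> 5*real e2*(l-1)/L"
      using key[OF h2] Lp by (intro divide_right_mono) auto
    then show ?thesis using w2 by simp
  qed
  define k where "k = 1 - 5*(l-1)/L"
  have k0: "k \<ge> 0" using lg Lp by (simp add: k_def l_def field_simps)
  have "(real e1 + real e2) * k = (e1 - 5*e1*(l-1)/L) + (e2 - 5*e2*(l-1)/L)"
    using Lp by (simp add: k_def field_simps)
  then have "W1 + W2 \<ge> (real e1 + real e2) * k" using a1 a2 by linarith
  moreover have "(real e1 + real e2) * k \<ge> (real e - 4*real e/L) * k" using s k0 by (rule mult_right_mono)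
  moreover have "(real e - 4*real e/L) * k \<ge> real e - 5*real e*l/L"
  proof -
    have "(real e - 4*real e/L) * k - (real e - 5*real e*l/L) = real e * (L + 20*l - 20) / L^2"
      using Lp by (simp add: k_def field_simps power2_eq_square)
    moreover have "real e * (L + 20*l - 20) / L^2 \<ge> 0" using L l0 by simp
    ultimately show ?thesis by linarith
  qed
  ultimately show ?thesis by (simp add: l_def)
qed

lemma log_small:
  assumes "k \<le> e" "5 * log 2 (real e) \<le> L" "L \<ge> 20"
  shows "5 * log 2 (real k) \<le> L"
proof (cases "k = 0")
  case True then show ?thesis using assms by (simp add: log_def)
next
  case False
  then have "log 2 (real k) \<le> log 2 (real e)" using assms by (subst log_le_cancel_iff) auto
  then show ?thesis using assms by linarith
qed

lemma sep_AB:
  assumes "inside (a',r,c',c0) y" "inside (Suc r,b',Suc c0,d') x"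
  shows "sep x y"
  using assms by (cases x; cases y) auto

lemma inside_trans_A:
  assumes "inside (a,r,c,c0) x" "r \<le> b" "c0 \<le> d"
  shows "inside (a,b,c,d) x"
  using assms by (cases x) auto

lemma inside_trans_B:
  assumes "inside (Suc r,b,Suc c0,d) x" "a \<le> r" "c \<le> c0"
  shows "inside (a,b,c,d) x"
  using assms by (cases x) auto

lemma main:
  assumes fin: "finite P" and L: "L \<ge> 20"
  shows "5 * log 2 (real (card (pts P R))) \<le> L \<Longrightarrow> \<exists>C. chain P L R C \<and>
     real (card (pts P R)) - 5 * real (card (pts P R)) * log 2 (real (card (pts P R))) / L
       \<le> (\<Sum>x\<leftarrow>C. real (card (pts P x)))"
proof (induction "card (pts P R)" arbitrary: R rule: less_induct)
  case less
  obtain a b c d where R: "R = (a,b,c,d)" by (cases R) auto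
  define S where "S = pts P R"
  define e where "e = card S"
  have finS: "finite S" using fin by (simp add: S_def R)
  have Lp: "L > 0" using L by simp
  show ?case
  proof (cases "e = 0")
    case True
    then show ?thesis by (intro exI[of _ "[]"]) (simp add: chain_def S_def e_def)
  next
    case False
    then have e1: "e \<ge> 1" by simp
    show ?thesis
    proof (cases "good1 P L R \<or> good2 P L R")
      case True
      from False obtain p where "p \<in> S" using e_def by (metis card.empty equals0I)
      then have ins: "inside R R" by (auto simp: S_def R)
      have "log 2 (real e) \<ge> 0" using e1 by simp
      then have "5 * real e * log 2 (real e) / L \<ge> 0" using Lp by simp
      then show ?thesis using True ins
        by (intro exI[of _ "[R]"]) (auto simp: chain_def S_def e_def)
    next
      case False
      then have ng1: "\<not> good1 P L R" and ng2: "\<not> good2 P L R" by auto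
      have Sd: "\<And>p. p \<in> S \<Longrightarrow> a \<le> fst p \<and> fst p < b \<and> c \<le> snd p \<and> snd p < d"
        by (auto simp: S_def R)
      define f where "f t = card {p\<in>S. fst p < t}" for t
      define g where "g t = card {p\<in>S. snd p < t}" for t
      have fb: "e \<le> 2 * f (Suc b)"
      proof -
        have "{p\<in>S. fst p < Suc b} = S" using Sd by fastforce
        then show ?thesis by (simp add: f_def e_def)
      qed
      have gd: "e \<le> 2 * g (Suc d)"
      proof -
        have "{p\<in>S. snd p < Suc d} = S" using Sd by fastforce
        then show ?thesis by (simp add: g_def e_def)
      qed
      define r where "r = (LEAST t. e \<le> 2 * f (Suc t))"
      define c0 where "c0 = (LEAST t. e \<le> 2 * g (Suc t))"
      have r1: "e \<le> 2 * f (Suc r)" unfolding r_def by (rule LeastI[of _ b]) (rule fb)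
      have c01: "e \<le> 2 * g (Suc c0)" unfolding c0_def by (rule LeastI[of _ d]) (rule gd)
      have rb: "r \<le> b" unfolding r_def by (rule Least_le) (rule fb)
      have c0d: "c0 \<le> d" unfolding c0_def by (rule Least_le) (rule gd)
      have r2: "2 * f r < e"
      proof (cases r)
        case 0 then show ?thesis using e1 by (simp add: f_def)
      next
        case (Suc r')
        have "\<not> e \<le> 2 * f (Suc r')" unfolding r_def
          using not_less_Least[of r' "\<lambda>t. e \<le> 2 * f (Suc t)"] Suc r_def by simp
        then show ?thesis using Suc by simp
      qed
      have c02: "2 * g c0 < e"
      proof (cases c0)
        case 0 then show ?thesis using e1 by (simp add: g_def)
      next
        case (Suc r')
        have "\<not> e \<le> 2 * g (Suc r')"
          using not_less_Least[of r' "\<lambda>t. e \<le> 2 * g (Suc t)"] Suc c0_def by simp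
        then show ?thesis using Suc by simp
      qed
      have ar: "a \<le> r"
      proof (rule ccontr)
        assume "\<not> a \<le> r"
        then have "{p\<in>S. fst p < Suc r} = {}" using Sd by fastforce
        then have "f (Suc r) = 0" unfolding f_def by (metis card.empty)
        then show False using r1 e1 by simp
      qed
      have cc0: "c \<le> c0"
      proof (rule ccontr)
        assume "\<not> c \<le> c0"
        then have "{p\<in>S. snd p < Suc c0} = {}" using Sd by fastforce
        then have "g (Suc c0) = 0" unfolding g_def by (metis card.empty)
        then show False using c01 e1 by simp
      qed
      define lowR where "lowR = {p\<in>S. fst p < r}"
      define highR where "highR = {p\<in>S. r < fst p}"
      define lowC where "lowC = {p\<in>S. snd p < c0}"
      define highC where "highC = {p\<in>S. c0 < snd p}"
      have hR: "2 * card highR \<le> e"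
      proof -
        have "S = {p\<in>S. fst p < Suc r} \<union> highR" by (auto simp: highR_def)
        moreover have "{p\<in>S. fst p < Suc r} \<inter> highR = {}" by (auto simp: highR_def)
        ultimately have "e = f (Suc r) + card highR"
          using finS unfolding e_def f_def highR_def by (metis (no_types, lifting) card_Un_disjoint finite_Un)
        then show ?thesis using r1 by linarith
      qed
      have hC: "2 * card highC \<le> e"
      proof -
        have "S = {p\<in>S. snd p < Suc c0} \<union> highC" by (auto simp: highC_def)
        moreover have "{p\<in>S. snd p < Suc c0} \<inter> highC = {}" by (auto simp: highC_def)
        ultimately have "e = g (Suc c0) + card highC"
          using finS unfolding e_def g_def highC_def by (metis (no_types, lifting) card_Un_disjoint finite_Un)
        then show ?thesis using c01 by linarith
      qed
      have lR: "2 * card lowR < e" using r2 by (simp add: lowR_def f_def)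
      have lC: "2 * card lowC < e" using c02 by (simp add: lowC_def g_def)
      define A where "A = lowR \<inter> lowC"
      define B where "B = highR \<inter> highC"
      define D where "D = lowR \<inter> highC"
      define F where "F = highR \<inter> lowC"
      define Rr where "Rr = {p\<in>S. fst p = r}"
      define Cc where "Cc = {p\<in>S. snd p = c0}"
      have fins: "finite lowR" "finite highR" "finite lowC" "finite highC"
        using finS by (auto simp: lowR_def highR_def lowC_def highC_def)
      have sub_card: "card X + card Y \<le> card Z"
        if "X \<subseteq> Z" "Y \<subseteq> Z" "X \<inter> Y = {}" "finite Z" for X Y Z :: "(nat\<times>nat) set"
      proof -
        have "card (X \<union> Y) = card X + card Y"
          using that by (intro card_Un_disjoint) (auto intro: finite_subset)
        moreover have "card (X \<union> Y) \<le> card Z" using that by (intro card_mono) auto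
        ultimately show ?thesis by simp
      qed
      have c1: "card A + card D \<le> card lowR"
        by (rule sub_card) (auto simp: A_def D_def fins lowC_def highC_def)
      have c2: "card A + card F \<le> card lowC"
        by (rule sub_card) (auto simp: A_def F_def fins lowR_def highR_def)
      have c3: "card B + card F \<le> card highR"
        by (rule sub_card) (auto simp: B_def F_def fins lowC_def highC_def)
      have c4: "card B + card D \<le> card highC"
        by (rule sub_card) (auto simp: B_def D_def fins lowR_def highR_def)
      have cover: "e \<le> card A + card B + card D + card F + card Rr + card Cc"
      proof -
        have "S \<subseteq> A \<union> B \<union> D \<union> F \<union> Rr \<union> Cc"
          by (auto simp: A_def B_def D_def F_def Rr_def Cc_def lowR_def highR_def lowC_def highC_def)
        then have "e \<le> card (A \<union> B \<union> D \<union> F \<union> Rr \<union> Cc)"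
          unfolding e_def by (rule card_mono[rotated])
            (simp add: A_def B_def D_def F_def Rr_def Cc_def fins finS)
        also have "\<dots> \<le> card A + card B + card D + card F + card Rr + card Cc"
          using card_Un_le[of "A \<union> B \<union> D \<union> F \<union> Rr" Cc] card_Un_le[of "A \<union> B \<union> D \<union> F" Rr]
            card_Un_le[of "A \<union> B \<union> D" F] card_Un_le[of "A \<union> B" D] card_Un_le[of A B]
          by linarith
        finally show ?thesis .
      qed
      have pR: "pts P R = S" by (simp add: S_def)
      have ep: "real e / L > 0" using e1 Lp by simp
      have cRr: "real (card Rr) < real e / L"
      proof (cases "Rr = {}")
        case True then show ?thesis using ep by simp
      next
        case False
        then obtain p where p: "p \<in> Rr" by auto
        then have "Rr = {q\<in>S. fst q = fst p}" by (auto simp: Rr_def)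
        then show ?thesis using ng1 p unfolding good1_def pR e_def Rr_def by force
      qed
      have cCc: "real (card Cc) < real e / L"
      proof (cases "Cc = {}")
        case True then show ?thesis using ep by simp
      next
        case False
        then obtain p where p: "p \<in> Cc" by auto
        then have "Cc = {q\<in>S. snd q = snd p}" by (auto simp: Cc_def)
        then show ?thesis using ng1 p unfolding good1_def pR e_def Cc_def by force
      qed
      have DF: "D \<noteq> {} \<Longrightarrow> F \<noteq> {} \<Longrightarrow> real (card D) < real e / L \<and> real (card F) < real e / L"
      proof -
        assume "D \<noteq> {}" "F \<noteq> {}"
        then obtain p q where p: "p \<in> D" and q: "q \<in> F" by auto
        have "F \<subseteq> {x\<in>S. ilace p x}" using p
          by (auto simp: F_def D_def ilace_def lowR_def highR_def lowC_def highC_def)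
        then have "card F \<le> card {x\<in>S. ilace p x}" using finS by (intro card_mono) auto
        moreover have "real (card {x\<in>S. ilace p x}) < real e / L"
          using ng2 p unfolding good2_def pR e_def by (force simp: D_def lowR_def)
        moreover have "D \<subseteq> {x\<in>S. ilace q x}" using q
          by (auto simp: F_def D_def ilace_def lowR_def highR_def lowC_def highC_def)
        then have "card D \<le> card {x\<in>S. ilace q x}" using finS by (intro card_mono) auto
        moreover have "real (card {x\<in>S. ilace q x}) < real e / L"
          using ng2 q unfolding good2_def pR e_def by (force simp: F_def highR_def)
        ultimately show ?thesis by linarith
      qed
      have AB: "real (card A) + real (card B) \<ge> real e - 4 * real e / L"
      proof -
        have r: "real e \<le> real (card A) + real (card B) + real (card D) + real (card F) + real (card Rr) + real (card Cc)"
          using cover by linarith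
        have "2 * (card A + card D) < e" using c1 lR by (simp add: algebra_simps)
        then have "real (2 * (card A + card D)) < real e" by (simp only: of_nat_less_iff of_nat_le_iff)
        then have r1: "2 * (real (card A) + real (card D)) < real e" by simp
        have "2 * (card A + card F) < e" using c2 lC by (simp add: algebra_simps)
        then have "real (2 * (card A + card F)) < real e" by (simp only: of_nat_less_iff of_nat_le_iff)
        then have r2: "2 * (real (card A) + real (card F)) < real e" by simp
        have "2 * (card B + card F) \<le> e" using c3 hR by (simp add: algebra_simps)
        then have "real (2 * (card B + card F)) \<le> real e" by (simp only: of_nat_less_iff of_nat_le_iff)
        then have r3: "2 * (real (card B) + real (card F)) \<le> real e" by simp
        have "2 * (card B + card D) \<le> e" using c4 hC by (simp add: algebra_simps)
        then have "real (2 * (card B + card D)) \<le> real e" by (simp only: of_nat_less_iff of_nat_le_iff)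
        then have r4: "2 * (real (card B) + real (card D)) \<le> real e" by simp
        show ?thesis
        proof (cases "D = {} \<or> F = {}")
          case True
          then show ?thesis using r r1 r2 r3 r4 cRr cCc by auto
        next
          case False
          then show ?thesis using DF r cRr cCc by auto
        qed
      qed
      have pA: "pts P (a,r,c,c0) = A" using rb c0d
        by (auto simp: A_def S_def R lowR_def lowC_def)
      have pB: "pts P (Suc r,b,Suc c0,d) = B" using ar cc0
        by (auto simp: B_def S_def R highR_def highC_def)
      have cA: "2 * card A \<le> e" using c1 lR by (simp add: algebra_simps)
      have cB: "2 * card B \<le> e" using c4 hC by (simp add: algebra_simps)
      have lg: "5 * log 2 (real e) \<le> L" using less.prems by (simp add: e_def S_def)
      obtain CA where CA: "chain P L (a,r,c,c0) CA"
        "real (card A) - 5 * real (card A) * log 2 (real (card A)) / L \<le> (\<Sum>x\<leftarrow>CA. real (card (pts P x)))"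
        using less.hyps[of "(a,r,c,c0)"] pA cA e1 log_small[OF _ lg L, of "card A"]
        by (auto simp: e_def S_def)
      obtain CB where CB: "chain P L (Suc r,b,Suc c0,d) CB"
        "real (card B) - 5 * real (card B) * log 2 (real (card B)) / L \<le> (\<Sum>x\<leftarrow>CB. real (card (pts P x)))"
        using less.hyps[of "(Suc r,b,Suc c0,d)"] pB cB e1 log_small[OF _ lg L, of "card B"]
        by (auto simp: e_def S_def)
      have ch: "chain P L R (CB @ CA)"
        using CA(1) CB(1) unfolding chain_def sorted_wrt_append R
        by (auto intro: sep_AB inside_trans_A[OF _ rb c0d] inside_trans_B[OF _ ar cc0])
      have "real e - 5 * real e * log 2 (real e) / L \<le> (\<Sum>x\<leftarrow>CB @ CA. real (card (pts P x)))"
        using arith_step[OF L lg e1 cA cB AB CA(2) CB(2)] by simp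
      then show ?thesis using ch unfolding e_def S_def by blast
    qed
  qed
qed

definition sub :: "'a list \<Rightarrow> nat \<Rightarrow> nat \<Rightarrow> 'a list" where
  "sub Z a b = take (b - a) (drop a Z)"

lemma set_sub:
  assumes "b \<le> length Z"
  shows "set (sub Z a b) = {Z!k | k. a \<le> k \<and> k < b}"
proof -
  have "set (sub Z a b) = {sub Z a b ! t | t. t < length (sub Z a b)}" by (auto simp: set_conv_nth)
  also have "\<dots> = {Z!k | k. a \<le> k \<and> k < b}"
  proof safe
    fix t assume "t < length (sub Z a b)"
    then show "\<exists>k. sub Z a b ! t = Z ! k \<and> a \<le> k \<and> k < b"
      using assms by (intro exI[of _ "a + t"]) (auto simp: sub_def)
  next
    fix k assume "a \<le> k" "k < b"
    then show "\<exists>t. Z ! k = sub Z a b ! t \<and> t < length (sub Z a b)"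
      using assms by (intro exI[of _ "k - a"]) (auto simp: sub_def)
  qed
  finally show ?thesis .
qed

lemma sub_subpath:
  assumes "a < b" "b \<le> length Z"
  shows "subpath (sub Z a b) Z"
proof -
  have "Z = take a Z @ sub Z a b @ drop b Z"
  proof -
    have "drop (b - a) (drop a Z) = drop b Z" using assms(1) by (simp add: drop_drop)
    then have "drop a Z = sub Z a b @ drop b Z" unfolding sub_def by (metis append_take_drop_id)
    then show ?thesis by (metis append_take_drop_id)
  qed
  moreover have "sub Z a b \<noteq> []" using assms by (simp add: sub_def)
  ultimately show ?thesis unfolding subpath_def by blast
qed

lemma above_nth:
  assumes "distinct Z" "i < length Z" "j < length Z"
  shows "above Z (Z!i) (Z!j) \<longleftrightarrow> i < j"
  using assms unfolding above_def
  by (metis (no_types, lifting) less_trans nth_eq_iff_index_eq)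

definition PP :: "('a \<Rightarrow> 'a \<Rightarrow> bool) \<Rightarrow> 'a list \<Rightarrow> 'a list \<Rightarrow> (nat\<times>nat) set" where
  "PP E X Y = {(i,j). i < length X \<and> j < length Y \<and> E (X!i) (Y!j)}"

definition phi :: "'a list \<Rightarrow> 'a list \<Rightarrow> nat\<times>nat \<Rightarrow> 'a\<times>'a" where
  "phi X Y p = (X ! fst p, Y ! snd p)"

lemma finite_PP: "finite (PP E X Y)"
proof -
  have "PP E X Y \<subseteq> {..<length X} \<times> {..<length Y}" by (auto simp: PP_def)
  then show ?thesis by (rule finite_subset) auto
qed

lemma inj_phi:
  assumes "distinct X" "distinct Y"
  shows "inj_on (phi X Y) (PP E X Y)"
  using assms by (auto simp: inj_on_def phi_def PP_def nth_eq_iff_index_eq)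

lemma pts_sub: "pts (PP E X Y) R \<subseteq> PP E X Y"
  by (cases R) auto

lemma chords_sub:
  assumes "b \<le> length X" "d \<le> length Y"
  shows "chords E (sub X a b) (sub Y c d) = phi X Y ` pts (PP E X Y) (a,b,c,d)"
  using assms unfolding chords_def set_sub[OF assms(1)] set_sub[OF assms(2)]
  by (force simp: phi_def PP_def)

lemma card_chords_sub:
  assumes "distinct X" "distinct Y" "b \<le> length X" "d \<le> length Y"
  shows "card (chords E (sub X a b) (sub Y c d)) = card (pts (PP E X Y) (a,b,c,d))"
  unfolding chords_sub[OF assms(3,4)]
  by (rule card_image) (rule inj_on_subset[OF inj_phi[OF assms(1,2)] pts_sub])

definition tr :: "'a list \<Rightarrow> 'a list \<Rightarrow> nat\<times>nat\<times>nat\<times>nat \<Rightarrow> 'a list \<times> 'a list" where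
  "tr X Y R = (case R of (a,b,c,d) \<Rightarrow> (sub X a b, sub Y c d))"

lemma good1_tr:
  assumes dX: "distinct X" and dY: "distinct Y" and disj: "set X \<inter> set Y = {}"
    and ins: "inside (0, length X, 0, length Y) R" and g: "good1 (PP E X Y) L R"
  shows "\<exists>v\<in>set (fst (tr X Y R)) \<union> set (snd (tr X Y R)).
     real (card {c\<in>chords E (fst (tr X Y R)) (snd (tr X Y R)). fst c = v \<or> snd c = v})
       \<ge> real (card (chords E (fst (tr X Y R)) (snd (tr X Y R)))) / L"
proof -
  obtain a b c d where R: "R = (a,b,c,d)" by (cases R) auto
  have bX: "b \<le> length X" and dYl: "d \<le> length Y" using ins by (auto simp: R)
  define Q where "Q = pts (PP E X Y) R"
  have ch: "chords E (fst (tr X Y R)) (snd (tr X Y R)) = phi X Y ` Q"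
    using chords_sub[OF bX dYl] by (simp add: tr_def R Q_def)
  have injQ: "inj_on (phi X Y) Q"
    unfolding Q_def by (rule inj_on_subset[OF inj_phi[OF dX dY] pts_sub])
  have cQ: "card (phi X Y ` Q) = card Q" using injQ by (rule card_image)
  have Qr: "\<And>q. q \<in> Q \<Longrightarrow> a \<le> fst q \<and> fst q < b \<and> c \<le> snd q \<and> snd q < d"
    by (auto simp: Q_def R)
  from g obtain p where p: "p \<in> Q" and
    alt: "real (card {q\<in>Q. fst q = fst p}) \<ge> real (card Q) / L \<or>
          real (card {q\<in>Q. snd q = snd p}) \<ge> real (card Q) / L"
    unfolding good1_def Q_def by blast
  from alt show ?thesis
  proof
    assume h: "real (card {q\<in>Q. fst q = fst p}) \<ge> real (card Q) / L"
    define v where "v = X ! fst p"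
    have vin: "v \<in> set (fst (tr X Y R))"
      using Qr[OF p] bX by (auto simp: tr_def R set_sub v_def)
    have "{c\<in>phi X Y ` Q. fst c = v \<or> snd c = v} = phi X Y ` {q\<in>Q. fst q = fst p}"
    proof (intro equalityI subsetI)
      fix cc assume "cc \<in> {c\<in>phi X Y ` Q. fst c = v \<or> snd c = v}"
      then obtain q where q: "q \<in> Q" "fst (phi X Y q) = v \<or> snd (phi X Y q) = v" and ccq: "cc = phi X Y q" by auto
      have "fst q < length X" "snd q < length Y" "fst p < length X"
        using Qr[OF q(1)] Qr[OF p] bX dYl by auto
      then have m: "Y ! snd q \<in> set Y" "X ! fst p \<in> set X" "X ! fst q \<in> set X" by (blast intro: nth_mem)+
      have "X ! fst p \<notin> set Y" using disj m(2) by (auto simp: disjoint_iff)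
      then have "Y ! snd q \<noteq> X ! fst p" using m(1) by metis
      then have "X ! fst q = X ! fst p" using q(2) unfolding phi_def v_def by auto
      then have "fst q = fst p" using dX \<open>fst q < length X\<close> \<open>fst p < length X\<close>
        by (simp add: nth_eq_iff_index_eq)
      then show "cc \<in> phi X Y ` {q \<in> Q. fst q = fst p}" using q(1) ccq by auto
    next
      fix cc assume "cc \<in> phi X Y ` {q \<in> Q. fst q = fst p}"
      then obtain q where q: "q \<in> Q" "fst q = fst p" "cc = phi X Y q" by auto
      then have "cc \<in> phi X Y ` Q" by blast
      moreover have "fst cc = v" using q by (simp add: phi_def v_def)
      ultimately show "cc \<in> {c\<in>phi X Y ` Q. fst c = v \<or> snd c = v}" by blast
    qed
    then have "real (card {c\<in>phi X Y ` Q. fst c = v \<or> snd c = v}) \<ge> real (card (phi X Y ` Q)) / L"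
      using h cQ card_image[OF inj_on_subset[OF injQ, of "{q\<in>Q. fst q = fst p}"]] by auto
    then show ?thesis using vin ch by auto
  next
    assume h: "real (card {q\<in>Q. snd q = snd p}) \<ge> real (card Q) / L"
    define v where "v = Y ! snd p"
    have vin: "v \<in> set (snd (tr X Y R))"
      using Qr[OF p] dYl by (auto simp: tr_def R set_sub v_def)
    have "{c\<in>phi X Y ` Q. fst c = v \<or> snd c = v} = phi X Y ` {q\<in>Q. snd q = snd p}"
    proof (intro equalityI subsetI)
      fix cc assume "cc \<in> {c\<in>phi X Y ` Q. fst c = v \<or> snd c = v}"
      then obtain q where q: "q \<in> Q" "fst (phi X Y q) = v \<or> snd (phi X Y q) = v" and ccq: "cc = phi X Y q" by auto
      have "fst q < length X" "snd q < length Y" "snd p < length Y"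
        using Qr[OF q(1)] Qr[OF p] bX dYl by auto
      then have m: "X ! fst q \<in> set X" "Y ! snd p \<in> set Y" by (blast intro: nth_mem)+
      have "X ! fst q \<notin> set Y" using disj m(1) by (auto simp: disjoint_iff)
      then have "X ! fst q \<noteq> Y ! snd p" using m(2) by metis
      then have "Y ! snd q = Y ! snd p" using q(2) unfolding phi_def v_def by auto
      then have "snd q = snd p" using dY \<open>snd q < length Y\<close> \<open>snd p < length Y\<close>
        by (simp add: nth_eq_iff_index_eq)
      then show "cc \<in> phi X Y ` {q \<in> Q. snd q = snd p}" using q(1) ccq by auto
    next
      fix cc assume "cc \<in> phi X Y ` {q \<in> Q. snd q = snd p}"
      then obtain q where q: "q \<in> Q" "snd q = snd p" "cc = phi X Y q" by auto
      then have "cc \<in> phi X Y ` Q" by blast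
      moreover have "snd cc = v" using q by (simp add: phi_def v_def)
      ultimately show "cc \<in> {c\<in>phi X Y ` Q. fst c = v \<or> snd c = v}" by blast
    qed
    then have "real (card {c\<in>phi X Y ` Q. fst c = v \<or> snd c = v}) \<ge> real (card (phi X Y ` Q)) / L"
      using h cQ card_image[OF inj_on_subset[OF injQ, of "{q\<in>Q. snd q = snd p}"]] by auto
    then show ?thesis using vin ch by auto
  qed
qed

lemma good2_tr:
  assumes dX: "distinct X" and dY: "distinct Y"
    and ins: "inside (0, length X, 0, length Y) R" and g: "good2 (PP E X Y) L R"
  shows "\<exists>c\<in>chords E (fst (tr X Y R)) (snd (tr X Y R)).
     real (card {d\<in>chords E (fst (tr X Y R)) (snd (tr X Y R)). interlacing X Y c d})
       \<ge> real (card (chords E (fst (tr X Y R)) (snd (tr X Y R)))) / L"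
proof -
  obtain a b c d where R: "R = (a,b,c,d)" by (cases R) auto
  have bX: "b \<le> length X" and dYl: "d \<le> length Y" using ins by (auto simp: R)
  define Q where "Q = pts (PP E X Y) R"
  have ch: "chords E (fst (tr X Y R)) (snd (tr X Y R)) = phi X Y ` Q"
    using chords_sub[OF bX dYl] by (simp add: tr_def R Q_def)
  have injQ: "inj_on (phi X Y) Q"
    unfolding Q_def by (rule inj_on_subset[OF inj_phi[OF dX dY] pts_sub])
  have cQ: "card (phi X Y ` Q) = card Q" using injQ by (rule card_image)
  have Qr: "\<And>q. q \<in> Q \<Longrightarrow> fst q < length X \<and> snd q < length Y"
    using bX dYl by (auto simp: Q_def R)
  from g obtain p where p: "p \<in> Q" and
    h: "real (card {q\<in>Q. ilace p q}) \<ge> real (card Q) / L"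
    unfolding good2_def Q_def by blast
  have il: "interlacing X Y (phi X Y p) (phi X Y q) \<longleftrightarrow> ilace p q" if q: "q \<in> Q" for q
    using Qr[OF p] Qr[OF q] dX dY
    unfolding interlacing_def parallel_chords_def ilace_def phi_def
    by (auto simp: above_nth nth_eq_iff_index_eq)
  have "{d\<in>phi X Y ` Q. interlacing X Y (phi X Y p) d} = phi X Y ` {q\<in>Q. ilace p q}"
    using il by auto
  then have "real (card {d\<in>phi X Y ` Q. interlacing X Y (phi X Y p) d}) \<ge> real (card (phi X Y ` Q)) / L"
    using h cQ card_image[OF inj_on_subset[OF injQ, of "{q\<in>Q. ilace p q}"]] by auto
  then show ?thesis using ch p by auto
qed

lemma sum_filter_split:
  "(\<Sum>x\<leftarrow>xs. (f x :: real)) = (\<Sum>x\<leftarrow>filter Q xs. f x) + (\<Sum>x\<leftarrow>filter (\<lambda>x. \<not> Q x) xs. f x)"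
  by (induction xs) auto

lemma realize:
  assumes dX: "distinct X" and dY: "distinct Y"
    and ins: "\<forall>x\<in>set C. inside (0, length X, 0, length Y) x" and srt: "sorted_wrt sep C"
  shows "parallel_collection X Y (map (tr X Y) C)"
    and "(\<Sum>i<length (map (tr X Y) C). real (card (chords E (fst (map (tr X Y) C ! i)) (snd (map (tr X Y) C ! i)))))
         = (\<Sum>x\<leftarrow>C. real (card (pts (PP E X Y) x)))"
proof -
  show "parallel_collection X Y (map (tr X Y) C)"
    unfolding parallel_collection_def
  proof safe
    fix i assume i: "i < length (map (tr X Y) C)"
    obtain a b c d where Ci: "C ! i = (a,b,c,d)" by (cases "C ! i") auto
    have "inside (0, length X, 0, length Y) (a,b,c,d)" using ins i Ci by (metis length_map nth_mem)
    then have "a < b" "b \<le> length X" "c < d" "d \<le> length Y" by auto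
    then show "subpath (fst (map (tr X Y) C ! i)) X" "subpath (snd (map (tr X Y) C ! i)) Y"
      using i Ci by (auto simp: tr_def intro: sub_subpath)
  next
    fix i j assume ij: "i < j" "j < length (map (tr X Y) C)"
    obtain a b c d where Ci: "C ! i = (a,b,c,d)" by (cases "C ! i") auto
    obtain a' b' c' d' where Cj: "C ! j = (a',b',c',d')" by (cases "C ! j") auto
    have insi: "inside (0, length X, 0, length Y) (a,b,c,d)" using ins ij Ci by (metis length_map nth_mem order.strict_trans)
    have insj: "inside (0, length X, 0, length Y) (a',b',c',d')" using ins ij Cj by (metis length_map nth_mem)
    have "sep (C ! i) (C ! j)" using srt ij by (simp add: sorted_wrt_iff_nth_less)
    then have sp: "b' \<le> a" "d' \<le> c" using Ci Cj by auto
    have bX: "b \<le> length X" "b' \<le> length X" "d \<le> length Y" "d' \<le> length Y" using insi insj by auto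
    have fi: "fst (map (tr X Y) C ! i) = sub X a b" "snd (map (tr X Y) C ! i) = sub Y c d"
      using ij Ci by (auto simp: tr_def)
    have fj: "fst (map (tr X Y) C ! j) = sub X a' b'" "snd (map (tr X Y) C ! j) = sub Y c' d'"
      using ij Cj by (auto simp: tr_def)
    have belX: "set_below X (set (sub X a b)) (set (sub X a' b'))"
      unfolding set_below_def set_sub[OF bX(1)] set_sub[OF bX(2)]
      using sp bX by (auto simp: above_nth[OF dX])
    have belY: "set_below Y (set (sub Y c d)) (set (sub Y c' d'))"
      unfolding set_below_def set_sub[OF bX(3)] set_sub[OF bX(4)]
      using sp bX by (auto simp: above_nth[OF dY])
    have irr: "\<not> above Z v v" if "distinct Z" for Z and v :: 'a
      using that unfolding above_def by (metis nth_eq_iff_index_eq order_less_irrefl order.strict_trans)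
    show "set_below X (set (fst (map (tr X Y) C ! i))) (set (fst (map (tr X Y) C ! j)))"
      using belX fi fj by simp
    show "set_below Y (set (snd (map (tr X Y) C ! i))) (set (snd (map (tr X Y) C ! j)))"
      using belY fi fj by simp
    show "\<And>x. x \<in> set (fst (map (tr X Y) C ! i)) \<Longrightarrow> x \<in> set (fst (map (tr X Y) C ! j)) \<Longrightarrow> x \<in> {}"
      using belX fi fj irr[OF dX] unfolding set_below_def by auto
    show "\<And>x. x \<in> set (snd (map (tr X Y) C ! i)) \<Longrightarrow> x \<in> set (snd (map (tr X Y) C ! j)) \<Longrightarrow> x \<in> {}"
      using belY fi fj irr[OF dY] unfolding set_below_def by auto
  qed
  have t: "real (card (chords E (fst (tr X Y x)) (snd (tr X Y x)))) = real (card (pts (PP E X Y) x))"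
    if "x \<in> set C" for x
  proof -
    obtain a b c d where x: "x = (a,b,c,d)" by (cases x) auto
    have "b \<le> length X" "d \<le> length Y" using ins that x by auto
    then show ?thesis using card_chords_sub[OF dX dY] x by (simp add: tr_def)
  qed
  have "(\<Sum>x\<leftarrow>C. real (card (pts (PP E X Y) x))) = (\<Sum>i<length C. real (card (pts (PP E X Y) (C ! i))))"
    by (simp add: sum_list_sum_nth atLeast0LessThan)
  also have "\<dots> = (\<Sum>i<length C. real (card (chords E (fst (tr X Y (C ! i))) (snd (tr X Y (C ! i))))))"
    using t by (intro sum.cong) auto
  finally show "(\<Sum>i<length (map (tr X Y) C). real (card (chords E (fst (map (tr X Y) C ! i)) (snd (map (tr X Y) C ! i)))))
         = (\<Sum>x\<leftarrow>C. real (card (pts (PP E X Y) x)))" by simp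
qed

theorem lemma4p2:
  fixes E :: "'a \<Rightarrow> 'a \<Rightarrow> bool" and X Y :: "'a list"
  assumes "simple_graph E"
    and "section_pair E X Y"
    and "card (chords E X Y) \<ge> 2"
  shows "\<exists>C. parallel_collection X Y C \<and>
     (\<Sum>i<length C. real (card (chords E (fst (C ! i)) (snd (C ! i)))))
        \<ge> real (card (chords E X Y)) / 24 \<and>
     ((\<forall>i < length C. \<exists>v \<in> set (fst (C ! i)) \<union> set (snd (C ! i)).
         real (card {c \<in> chords E (fst (C ! i)) (snd (C ! i)). fst c = v \<or> snd c = v})
           \<ge> real (card (chords E (fst (C ! i)) (snd (C ! i))))
              / (6 * log 2 (real (card (chords E X Y))))) \<or>
      (\<forall>i < length C. \<exists>c \<in> chords E (fst (C ! i)) (snd (C ! i)).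
         real (card {d \<in> chords E (fst (C ! i)) (snd (C ! i)). interlacing X Y c d})
           \<ge> real (card (chords E (fst (C ! i)) (snd (C ! i))))
              / (6 * log 2 (real (card (chords E X Y))))))"
proof -
  have dX: "distinct X" and dY: "distinct Y" and disj: "set X \<inter> set Y = {}"
    using assms(2) by (auto simp: section_pair_def is_path_def)
  define m where "m = card (chords E X Y)"
  define P where "P = PP E X Y"
  have pP: "pts P (0, length X, 0, length Y) = P" by (auto simp: P_def PP_def)
  have chXY: "chords E X Y = phi X Y ` P"
    using chords_sub[of "length X" X "length Y" Y E 0 0] pP by (simp add: sub_def P_def)
  have mP: "m = card P" unfolding m_def chXY P_def
    by (rule card_image) (rule inj_phi[OF dX dY])
  have m2: "m \<ge> 2" using assms(3) by (simp add: m_def)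
  have lg1: "log 2 (real m) \<ge> 1" using m2 by simp
  show ?thesis
  proof (cases "m \<le> 24")
    case True
    have "chords E X Y \<noteq> {}" using m2 by (auto simp: m_def)
    then obtain x y where xy: "(x,y) \<in> chords E X Y" by auto
    then have xX: "x \<in> set X" and yY: "y \<in> set Y" and Exy: "E x y" by (auto simp: chords_def)
    have ch1: "chords E [x] [y] = {(x,y)}" using Exy by (auto simp: chords_def)
    have sx: "subpath [x] X" using split_list[OF xX] by (auto simp: subpath_def)
    have sy: "subpath [y] Y" using split_list[OF yY] by (auto simp: subpath_def)
    have pc: "parallel_collection X Y [([x],[y])]" using sx sy by (simp add: parallel_collection_def)
    have s1: "(\<Sum>i<length [([x],[y])]. real (card (chords E (fst ([([x],[y])] ! i)) (snd ([([x],[y])] ! i)))))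
        \<ge> real (card (chords E X Y)) / 24" using True ch1 by (simp add: m_def[symmetric])
    have "1 / (6 * log 2 (real m)) \<le> 1" using lg1 by simp
    have t1: "\<forall>i < length [([x],[y])]. \<exists>v \<in> set (fst ([([x],[y])] ! i)) \<union> set (snd ([([x],[y])] ! i)).
         real (card {c \<in> chords E (fst ([([x],[y])] ! i)) (snd ([([x],[y])] ! i)). fst c = v \<or> snd c = v})
           \<ge> real (card (chords E (fst ([([x],[y])] ! i)) (snd ([([x],[y])] ! i))))
              / (6 * log 2 (real (card (chords E X Y))))"
    proof -
      have e: "{c. c = (x, y) \<and> (fst c = x \<or> snd c = x)} = {(x,y)}" by auto
      show ?thesis using ch1 \<open>1 / (6 * log 2 (real m)) \<le> 1\<close> by (simp add: m_def[symmetric] e)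
    qed
    show ?thesis using pc s1 t1 by blast
  next
    case False
    define L where "L = 6 * log 2 (real m)"
    have lg4: "log 2 (real m) \<ge> 4"
    proof -
      have "log 2 ((2::real) ^ 4) = 4" using log_pow_cancel[of "2::real" 4] by simp
      then have "log 2 (16::real) = 4" by simp
      moreover have "log 2 (16::real) \<le> log 2 (real m)" using False by simp
      ultimately show ?thesis by linarith
    qed
    have finP: "finite P" unfolding P_def by (rule finite_PP)
    have L20: "L \<ge> 20" using lg4 by (simp add: L_def)
    have lgL: "5 * log 2 (real (card (pts P (0, length X, 0, length Y)))) \<le> L"
      unfolding pP mP[symmetric] L_def using lg4 by simp
    obtain C0 where C0: "chain P L (0, length X, 0, length Y) C0"
      "real (card P) - 5 * real (card P) * log 2 (real (card P)) / L \<le> (\<Sum>x\<leftarrow>C0. real (card (pts P x)))"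
      using main[OF finP L20 lgL] unfolding pP by blast
    have "5 * real m * log 2 (real m) / L = 5 * real m / 6" using lg4 by (simp add: L_def)
    then have h5: "5 * real (card P) * log 2 (real (card P)) / L = 5 * real (card P) / 6" by (simp add: mP)
    have "real m = real (card P)" by (simp add: mP)
    moreover have "real (card P) - 5 * real (card P) / 6 \<le> (\<Sum>x\<leftarrow>C0. real (card (pts P x)))"
      using C0(2) unfolding h5 .
    ultimately have S0: "real m / 6 \<le> (\<Sum>x\<leftarrow>C0. real (card (pts P x)))" by linarith
    define C1 where "C1 = filter (good1 P L) C0"
    define C2 where "C2 = filter (\<lambda>x. \<not> good1 P L x) C0"
    have split: "(\<Sum>x\<leftarrow>C0. real (card (pts P x))) = (\<Sum>x\<leftarrow>C1. real (card (pts P x))) + (\<Sum>x\<leftarrow>C2. real (card (pts P x)))"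
      unfolding C1_def C2_def by (rule sum_filter_split)
    have ins0: "\<forall>x\<in>set C0. inside (0, length X, 0, length Y) x" and srt0: "sorted_wrt sep C0"
      using C0(1) by (auto simp: chain_def)
    have ins1: "\<forall>x\<in>set C1. inside (0, length X, 0, length Y) x" using ins0 by (simp add: C1_def)
    have ins2: "\<forall>x\<in>set C2. inside (0, length X, 0, length Y) x" using ins0 by (simp add: C2_def)
    have srt1: "sorted_wrt sep C1" using srt0 by (simp add: C1_def sorted_wrt_filter)
    have srt2: "sorted_wrt sep C2" using srt0 by (simp add: C2_def sorted_wrt_filter)
    have g1: "\<forall>x\<in>set C1. good1 P L x" by (simp add: C1_def)
    have g2: "\<forall>x\<in>set C2. good2 P L x" using C0(1) by (auto simp: C2_def chain_def)
    have Lm: "6 * log 2 (real (card (chords E X Y))) = L" by (simp add: L_def m_def)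
    show ?thesis
    proof (cases "(\<Sum>x\<leftarrow>C1. real (card (pts P x))) \<ge> real m / 12")
      case True
      let ?C = "map (tr X Y) C1"
      have "\<forall>i < length ?C. \<exists>v \<in> set (fst (?C ! i)) \<union> set (snd (?C ! i)).
         real (card {c \<in> chords E (fst (?C ! i)) (snd (?C ! i)). fst c = v \<or> snd c = v})
           \<ge> real (card (chords E (fst (?C ! i)) (snd (?C ! i)))) / L"
        using good1_tr[OF dX dY disj] ins1 g1 unfolding P_def by simp
      then show ?thesis using realize(1)[OF dX dY ins1 srt1] realize(2)[OF dX dY ins1 srt1, of E] True unfolding Lm
        by (intro exI[of _ ?C]) (auto simp: m_def P_def)
    next
      case False
      then have T: "(\<Sum>x\<leftarrow>C2. real (card (pts P x))) \<ge> real m / 12" using S0 split by linarith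
      let ?C = "map (tr X Y) C2"
      have "\<forall>i < length ?C. \<exists>c \<in> chords E (fst (?C ! i)) (snd (?C ! i)).
         real (card {d \<in> chords E (fst (?C ! i)) (snd (?C ! i)). interlacing X Y c d})
           \<ge> real (card (chords E (fst (?C ! i)) (snd (?C ! i)))) / L"
        using good2_tr[OF dX dY] ins2 g2 unfolding P_def by simp
      then show ?thesis using realize(1)[OF dX dY ins2 srt2] realize(2)[OF dX dY ins2 srt2, of E] T unfolding Lm
        by (intro exI[of _ ?C]) (auto simp: m_def P_def)
    qed
  qed
qed

end
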